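(* Let $\Delta>0$, $T\ge1$, $\boldsymbol\mu_1=(\Delta,0)$ and $\boldsymbol\mu_2=(-\Delta,0)$. Consider the Bayesian two-armed Gaussian bandit in which the mean vector $\boldsymbol\mu$ is sampled uniformly from $\{\boldsymbol\mu_1,\boldsymbol\mu_2\}$, and let $a_\ast=\arg\max_{a\in\{1,2\}}\boldsymbol\mu_a$ (a random variable). Suppose additionally that the learner has access to a random element $M$ with mutual information $I(M;a_\ast)\le 1/16$. Then for any policy $\pi$ (which may use $M$), $$BR_T(\pi)\ge \Delta T\left(\frac12-\sqrt{\frac12\left(\frac1{16}+4T\Delta^2\right)}\right),$$ where $BR_T(\pi)=\mathbb{E}_{\boldsymbol\mu\sim\mathrm{Unif}\{\boldsymbol\mu_1,\boldsymbol\mu_2\}}[R_T(\pi,\boldsymbol\mu)]$.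
   Context: In the two-armed Gaussian bandit with means $\boldsymbol\mu=(\boldsymbol\mu_1,\boldsymbol\mu_2)$ (here $\boldsymbol\mu_a$ denotes the mean of arm $a$), at each round $t\in[T]$ the learner pulls an arm $a_t\in\{1,2\}$ and observes a reward drawn from a Gaussian distribution (unit variance) with mean $\boldsymbol\mu_{a_t}$, independently across rounds. $R_T(\pi,\boldsymbol\mu)=\mathbb{E}\big[\sum_{t=1}^T(\max_a\boldsymbol\mu_a-\boldsymbol\mu_{a_t})\big]$ is the expected regret of policy $\pi$ over $T$ rounds in the bandit with means $\boldsymbol\mu$. *)

theory Defs
  imports "HOL-Probability.Probability"
begin

text \<open>Arms are the natural numbers 1 and 2; a mean vector is a function nat => real
  (only its values at 1 and 2 matter).  A history is a function nat => nat * real whose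
  entry i (0-indexed) is the pair (action, observed reward) of round i+1; entries of
  rounds not yet played are the dummy value (0,0).\<close>

definition hist_space :: "(nat \<Rightarrow> nat \<times> real) measure" where
  "hist_space = PiM UNIV (\<lambda>_. count_space UNIV \<Otimes>\<^sub>M borel)"

definition arms_space :: "nat measure" where
  "arms_space = count_space {1, 2}"

text \<open>A (randomised) policy with side information of type 'm: at round t (0-indexed) it
  maps the side information m and the current history to a probability distribution on the
  arms {1,2}.\<close>

type_synonym 'm policy = "nat \<Rightarrow> 'm \<times> (nat \<Rightarrow> nat \<times> real) \<Rightarrow> nat measure"

definition policy_measurable :: "'m measure \<Rightarrow> 'm policy \<Rightarrow> bool" where
  "policy_measurable N \<pi> \<longleftrightarrow>
     (\<forall>t. \<pi> t \<in> N \<Otimes>\<^sub>M hist_space \<rightarrow>\<^sub>M prob_algebra arms_space)"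

fun traj :: "(nat \<Rightarrow> real) \<Rightarrow> 'm policy \<Rightarrow> 'm \<Rightarrow> nat \<Rightarrow> (nat \<Rightarrow> nat \<times> real) measure" where
  "traj mu \<pi> m 0 = return hist_space (\<lambda>_. (0, 0))"
| "traj mu \<pi> m (Suc t) =
     traj mu \<pi> m t \<bind> (\<lambda>h. \<pi> t (m, h) \<bind> (\<lambda>a.
       distr (density lborel (normal_density (mu a) 1)) hist_space (\<lambda>r. h(t := (a, r)))))"

definition cond_regret :: "'m policy \<Rightarrow> (nat \<Rightarrow> real) \<Rightarrow> 'm \<Rightarrow> nat \<Rightarrow> real" where
  "cond_regret \<pi> mu m T =
     (\<integral>h. (\<Sum>t<T. Max (mu ` {1, 2}) - mu (fst (h t))) \<partial>traj mu \<pi> m T)"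

definition best_arm :: "(nat \<Rightarrow> real) \<Rightarrow> nat" where
  "best_arm mu = (ARG_MAX mu a. a \<in> {1, 2})"

definition mu_one :: "real \<Rightarrow> nat \<Rightarrow> real" where
  "mu_one \<Delta> = (\<lambda>a. if a = 1 then \<Delta> else 0)"

definition mu_two :: "real \<Rightarrow> nat \<Rightarrow> real" where
  "mu_two \<Delta> = (\<lambda>a. if a = 1 then - \<Delta> else 0)"

end

theory Submission
  imports Defs
begin


definition gibbs :: "'a measure \<Rightarrow> 'a measure \<Rightarrow> real \<Rightarrow> bool" where
  "gibbs P Q K \<longleftrightarrow> (\<forall>\<phi>. \<phi> \<in> borel_measurable P \<longrightarrow> (\<exists>B. \<forall>x\<in>space P. \<bar>\<phi> x\<bar> \<le> B) \<longrightarrow>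
      (\<integral>x. \<phi> x \<partial>P) \<le> K + ln (\<integral>x. exp (\<phi> x) \<partial>Q))"

lemma prob_fin: "prob_space M \<Longrightarrow> finite_measure M"
  unfolding prob_space_def by simp

lemma bounded_integrable:
  fixes f :: "'a \<Rightarrow> real"
  assumes "finite_measure M" "f \<in> borel_measurable M" "\<And>x. x \<in> space M \<Longrightarrow> \<bar>f x\<bar> \<le> B"
  shows "integrable M f"
  using assms by (intro finite_measure.integrable_const_bound[where B=B]) (auto intro!: AE_I2)

lemma exp_integral_pos:
  fixes \<phi> :: "'a \<Rightarrow> real"
  assumes "prob_space Q" "\<phi> \<in> borel_measurable Q" "\<And>x. x \<in> space Q \<Longrightarrow> \<bar>\<phi> x\<bar> \<le> B"
  shows "exp (- B) \<le> (\<integral>x. exp (\<phi> x) \<partial>Q)" "(\<integral>x. exp (\<phi> x) \<partial>Q) \<le> exp B"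
proof -
  interpret prob_space Q by fact
  have lo: "\<And>x. x \<in> space Q \<Longrightarrow> -B \<le> \<phi> x" and hi: "\<And>x. x \<in> space Q \<Longrightarrow> \<phi> x \<le> B"
    using assms(3) by (metis abs_le_iff minus_le_iff)+
  have int: "integrable Q (\<lambda>x. exp (\<phi> x))"
    using assms by (intro bounded_integrable[where B="exp B"]) (auto simp: prob_fin dest!: abs_le_D1)
  have "(\<integral>x. exp (- B) \<partial>Q) \<le> (\<integral>x. exp (\<phi> x) \<partial>Q)"
    using lo hi int by (intro integral_mono) auto
  then show "exp (- B) \<le> (\<integral>x. exp (\<phi> x) \<partial>Q)" by (simp add: prob_space)
  have "(\<integral>x. exp (\<phi> x) \<partial>Q) \<le> (\<integral>x. exp B \<partial>Q)"
    using lo hi int by (intro integral_mono) auto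
  then show "(\<integral>x. exp (\<phi> x) \<partial>Q) \<le> exp B" by (simp add: prob_space)
qed

lemma abs_integral_le_prob:
  fixes \<phi> :: "'a \<Rightarrow> real"
  assumes "prob_space Q" "\<phi> \<in> borel_measurable Q" "\<And>x. x \<in> space Q \<Longrightarrow> \<bar>\<phi> x\<bar> \<le> B"
  shows "\<bar>\<integral>x. \<phi> x \<partial>Q\<bar> \<le> B"
proof -
  interpret prob_space Q by fact
  have lo: "\<And>x. x \<in> space Q \<Longrightarrow> -B \<le> \<phi> x" and hi: "\<And>x. x \<in> space Q \<Longrightarrow> \<phi> x \<le> B"
    using assms(3) by (metis abs_le_iff minus_le_iff)+
  have int: "integrable Q \<phi>"
    using assms by (intro bounded_integrable[where B=B]) (auto simp: prob_fin)
  have "(\<integral>x. -B \<partial>Q) \<le> (\<integral>x. \<phi> x \<partial>Q)" "(\<integral>x. \<phi> x \<partial>Q) \<le> (\<integral>x. B \<partial>Q)"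
    using lo hi int by (intro integral_mono; simp)+
  then show ?thesis by (simp add: prob_space)
qed

lemma gibbs_shift:
  fixes A K E :: real
  assumes E: "E > 0"
    and H: "\<And>c. A - c \<le> K + exp (- c) * E - 1"
  shows "A \<le> K + ln E"
proof -
  have "exp (- ln E) * E = 1" using E exp_add[of "-ln E" "ln E"] by simp
  then show ?thesis using H[of "ln E"] by linarith
qed

lemma gibbs_self:
  assumes "prob_space P"
  shows "gibbs P P 0"
  unfolding gibbs_def
proof (intro allI impI)
  interpret prob_space P by fact
  fix \<phi> :: "'a \<Rightarrow> real" assume m[measurable]: "\<phi> \<in> borel_measurable P" and "\<exists>B. \<forall>x\<in>space P. \<bar>\<phi> x\<bar> \<le> B"
  then obtain B where B: "\<And>x. x \<in> space P \<Longrightarrow> \<bar>\<phi> x\<bar> \<le> B" by blast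
  have i1: "integrable P \<phi>" using B by (intro bounded_integrable[where B=B]) (auto simp: prob_fin prob_space_axioms)
  have i2: "integrable P (\<lambda>x. exp (\<phi> x))" using B by (intro bounded_integrable[where B="exp B"]) (auto simp: prob_fin prob_space_axioms dest!: abs_le_D1)
  have E: "(\<integral>x. exp (\<phi> x) \<partial>P) > 0"
    using exp_integral_pos(1)[OF assms m B] by (meson exp_gt_zero less_le_trans)
  show "(\<integral>x. \<phi> x \<partial>P) \<le> 0 + ln (\<integral>x. exp (\<phi> x) \<partial>P)"
  proof (rule gibbs_shift[OF E])
    fix c
    have "(\<integral>x. \<phi> x \<partial>P) - c = (\<integral>x. \<phi> x - c \<partial>P)" using i1 by (simp add: prob_space)
    also have "\<dots> \<le> (\<integral>x. exp (- c) * exp (\<phi> x) - 1 \<partial>P)"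
    proof (intro integral_mono)
      show "integrable P (\<lambda>x. \<phi> x - c)" using i1 by auto
      show "integrable P (\<lambda>x. exp (- c) * exp (\<phi> x) - 1)" using i2 by auto
      fix x show "\<phi> x - c \<le> exp (- c) * exp (\<phi> x) - 1"
        using exp_ge_add_one_self[of "\<phi> x - c"] by (simp add: exp_diff exp_minus field_simps)
    qed
    also have "\<dots> = exp (- c) * (\<integral>x. exp (\<phi> x) \<partial>P) - 1" using i2 by (simp add: prob_space)
    finally show "(\<integral>x. \<phi> x \<partial>P) - c \<le> 0 + exp (- c) * (\<integral>x. exp (\<phi> x) \<partial>P) - 1" by simp
  qed
qed

lemma gibbs_mono: "gibbs P Q K \<Longrightarrow> K \<le> K' \<Longrightarrow> gibbs P Q K'"
  unfolding gibbs_def by force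

lemma gibbs_distr:
  assumes g: "gibbs P Q K" and s: "sets Q = sets P" and f[measurable]: "f \<in> P \<rightarrow>\<^sub>M X"
  shows "gibbs (distr P X f) (distr Q X f) K"
  unfolding gibbs_def
proof (intro allI impI)
  fix \<phi> :: "_ \<Rightarrow> real" assume m: "\<phi> \<in> borel_measurable (distr P X f)" and "\<exists>B. \<forall>x\<in>space (distr P X f). \<bar>\<phi> x\<bar> \<le> B"
  then obtain B where B: "\<And>x. x \<in> space X \<Longrightarrow> \<bar>\<phi> x\<bar> \<le> B" by auto
  have m'[measurable]: "\<phi> \<in> borel_measurable X" using m by simp
  have fQ[measurable]: "f \<in> Q \<rightarrow>\<^sub>M X" using f s by (simp cong: measurable_cong_sets)
  have "(\<integral>x. \<phi> (f x) \<partial>P) \<le> K + ln (\<integral>x. exp (\<phi> (f x)) \<partial>Q)"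
    using g unfolding gibbs_def
  proof (elim allE impE)
    show "(\<lambda>x. \<phi> (f x)) \<in> borel_measurable P" by measurable
    show "\<exists>B. \<forall>x\<in>space P. \<bar>\<phi> (f x)\<bar> \<le> B" using B measurable_space[OF f] by blast
  qed
  then show "(\<integral>x. \<phi> x \<partial>distr P X f) \<le> K + ln (\<integral>x. exp (\<phi> x) \<partial>distr Q X f)"
    by (simp add: integral_distr)
qed

lemma gibbs_bind:
  assumes A: "prob_space A" and Bp: "prob_space B" and s: "sets B = sets A"
    and k1[measurable]: "k1 \<in> A \<rightarrow>\<^sub>M prob_algebra X" and k2: "k2 \<in> A \<rightarrow>\<^sub>M prob_algebra X"
    and gAB: "gibbs A B K1" and gk: "\<And>x. x \<in> space A \<Longrightarrow> gibbs (k1 x) (k2 x) K2"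
  shows "gibbs (A \<bind> k1) (B \<bind> k2) (K1 + K2)"
  unfolding gibbs_def
proof (intro allI impI)
  interpret A: prob_space A by fact
  interpret B: prob_space B by fact
  have k2B[measurable]: "k2 \<in> B \<rightarrow>\<^sub>M prob_algebra X" using k2 s by (simp cong: measurable_cong_sets)
  have k2'[measurable]: "k2 \<in> A \<rightarrow>\<^sub>M subprob_algebra X" using k2 by (rule measurable_prob_algebraD)
  have k2B'[measurable]: "k2 \<in> B \<rightarrow>\<^sub>M subprob_algebra X" using k2B by (rule measurable_prob_algebraD)
  have k1'[measurable]: "k1 \<in> A \<rightarrow>\<^sub>M subprob_algebra X" using k1 by (rule measurable_prob_algebraD)
  have k1x: "\<And>x. x \<in> space A \<Longrightarrow> prob_space (k1 x) \<and> sets (k1 x) = sets X"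
    using measurable_space[OF k1] by (auto simp: space_prob_algebra)
  have k2x: "\<And>x. x \<in> space A \<Longrightarrow> prob_space (k2 x) \<and> sets (k2 x) = sets X"
    using measurable_space[OF k2] by (auto simp: space_prob_algebra)
  have sA: "space A \<noteq> {}" by (rule A.not_empty)
  have sB: "space B = space A" using s by (rule sets_eq_imp_space_eq)
  have sets1: "sets (A \<bind> k1) = sets X" using k1x sA by (intro sets_bind) auto
  fix \<phi> :: "_ \<Rightarrow> real" assume m: "\<phi> \<in> borel_measurable (A \<bind> k1)" and "\<exists>Bd. \<forall>x\<in>space (A \<bind> k1). \<bar>\<phi> x\<bar> \<le> Bd"
  then obtain Bd where Bd: "\<And>x. x \<in> space X \<Longrightarrow> \<bar>\<phi> x\<bar> \<le> Bd" using sets_eq_imp_space_eq[OF sets1] by auto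
  have m'[measurable]: "\<phi> \<in> borel_measurable X" using m sets1 by (simp cong: measurable_cong_sets)
  define \<psi> where "\<psi> x = ln (\<integral>y. exp (\<phi> y) \<partial>k2 x)" for x
  have \<psi>m[measurable]: "\<psi> \<in> borel_measurable A" unfolding \<psi>_def
    by (intro borel_measurable_ln measurable_compose[OF k2' integral_measurable_subprob_algebra]) measurable
  have exp_bounds: "exp (- Bd) \<le> (\<integral>y. exp (\<phi> y) \<partial>k2 x) \<and> (\<integral>y. exp (\<phi> y) \<partial>k2 x) \<le> exp Bd" if x: "x \<in> space A" for x
  proof -
    have "\<phi> \<in> borel_measurable (k2 x)" using k2x[OF x] by (simp cong: measurable_cong_sets)
    moreover have "\<And>y. y \<in> space (k2 x) \<Longrightarrow> \<bar>\<phi> y\<bar> \<le> Bd" using Bd k2x[OF x] sets_eq_imp_space_eq by blast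
    ultimately show ?thesis using exp_integral_pos[of "k2 x" \<phi> Bd] k2x[OF x] by auto
  qed
  have \<psi>b: "\<bar>\<psi> x\<bar> \<le> Bd" if x: "x \<in> space A" for x
  proof -
    have p: "0 < (\<integral>y. exp (\<phi> y) \<partial>k2 x)" using exp_bounds[OF x] by (meson exp_gt_zero less_le_trans)
    have "ln (exp (- Bd)) \<le> \<psi> x" "\<psi> x \<le> ln (exp Bd)" unfolding \<psi>_def
      using exp_bounds[OF x] p by (subst ln_le_cancel_iff; simp)+
    then show ?thesis by simp
  qed
  have I1m[measurable]: "(\<lambda>x. \<integral>y. \<phi> y \<partial>k1 x) \<in> borel_measurable A"
    by (intro measurable_compose[OF k1' integral_measurable_subprob_algebra]) measurable
  have I1b: "\<bar>\<integral>y. \<phi> y \<partial>k1 x\<bar> \<le> Bd" if x: "x \<in> space A" for x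
  proof -
    show ?thesis
      using Bd k1x[OF x] sets_eq_imp_space_eq
      by (intro abs_integral_le_prob) (auto cong: measurable_cong_sets)
  qed
  have "(\<integral>x. \<phi> x \<partial>(A \<bind> k1)) = (\<integral>x. (\<integral>y. \<phi> y \<partial>k1 x) \<partial>A)"
    using Bd by (intro integral_bind[where B'=1 and B=Bd and K=X]) (auto simp: prob_fin A k1x A.prob_space_axioms prob_space.emeasure_space_1)
  also have "\<dots> \<le> (\<integral>x. K2 + \<psi> x \<partial>A)"
  proof (intro integral_mono)
    show "integrable A (\<lambda>x. \<integral>y. \<phi> y \<partial>k1 x)"
      using I1b by (intro bounded_integrable[where B=Bd]) (auto simp: prob_fin A)
    show "integrable A (\<lambda>x. K2 + \<psi> x)"
      using \<psi>b by (intro bounded_integrable[where B="\<bar>K2\<bar> + Bd"]) (auto simp: prob_fin A intro: abs_triangle_ineq[THEN order_trans])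
    fix x assume x: "x \<in> space A"
    show "(\<integral>y. \<phi> y \<partial>k1 x) \<le> K2 + \<psi> x"
      using gk[OF x] unfolding gibbs_def \<psi>_def
    proof (elim allE impE)
      show "\<phi> \<in> borel_measurable (k1 x)" using k1x[OF x] by (simp cong: measurable_cong_sets)
      show "\<exists>B. \<forall>xa\<in>space (k1 x). \<bar>\<phi> xa\<bar> \<le> B" using Bd k1x[OF x] sets_eq_imp_space_eq by blast
    qed
  qed
  also have "\<dots> = K2 + (\<integral>x. \<psi> x \<partial>A)"
    using \<psi>b by (subst Bochner_Integration.integral_add) (auto simp: A.prob_space intro!: bounded_integrable[where B=Bd] prob_fin A)
  also have "(\<integral>x. \<psi> x \<partial>A) \<le> K1 + ln (\<integral>x. exp (\<psi> x) \<partial>B)"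
    using gAB unfolding gibbs_def using \<psi>m \<psi>b by blast
  also have "(\<integral>x. exp (\<psi> x) \<partial>B) = (\<integral>x. (\<integral>y. exp (\<phi> y) \<partial>k2 x) \<partial>B)"
  proof (intro Bochner_Integration.integral_cong refl)
    fix x assume "x \<in> space B"
    then have x: "x \<in> space A" using sB by simp
    have "0 < (\<integral>y. exp (\<phi> y) \<partial>k2 x)" using exp_bounds[OF x] by (meson exp_gt_zero less_le_trans)
    then show "exp (\<psi> x) = (\<integral>y. exp (\<phi> y) \<partial>k2 x)" unfolding \<psi>_def by simp
  qed
  also have "\<dots> = (\<integral>y. exp (\<phi> y) \<partial>(B \<bind> k2))"
    using Bd sB by (intro integral_bind[symmetric, where B'=1 and B="exp Bd" and K=X])
       (auto simp: prob_fin Bp k2x B.prob_space_axioms prob_space.emeasure_space_1 dest!: abs_le_D1)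
  finally show "(\<integral>x. \<phi> x \<partial>(A \<bind> k1)) \<le> K1 + K2 + ln (\<integral>x. exp (\<phi> x) \<partial>(B \<bind> k2))"
    by simp
qed



definition G :: "real \<Rightarrow> real measure" where
  "G \<mu> = density lborel (normal_density \<mu> 1)"

lemma prob_G: "prob_space (G \<mu>)"
  unfolding G_def by (rule prob_space_normal_density) simp

lemma sets_G[simp]: "sets (G \<mu>) = sets borel" and space_G[simp]: "space (G \<mu>) = UNIV"
  unfolding G_def by auto

lemma nd_shift: "normal_density \<mu> 1 x = normal_density 0 1 x * exp (\<mu> * x - \<mu>^2 / 2)"
proof -
  have "-(x - \<mu>)\<^sup>2 / 2 = - x\<^sup>2 / 2 + (\<mu> * x - \<mu>^2 / (2::real))"
    by (simp add: power2_eq_square field_simps)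
  then have "exp (-(x - \<mu>)\<^sup>2 / 2) = exp (- x\<^sup>2 / 2) * exp (\<mu> * x - \<mu>^2 / 2)"
    by (metis exp_add)
  then show ?thesis unfolding normal_density_def by simp
qed

lemma gibbs_G: "gibbs (G \<mu>) (G 0) (\<mu>^2 / 2)"
  unfolding gibbs_def
proof (intro allI impI)
  fix \<phi> :: "real \<Rightarrow> real" assume m: "\<phi> \<in> borel_measurable (G \<mu>)" and "\<exists>B. \<forall>x\<in>space (G \<mu>). \<bar>\<phi> x\<bar> \<le> B"
  then obtain Bd where Bd: "\<And>x. \<bar>\<phi> x\<bar> \<le> Bd" by auto
  have m'[measurable]: "\<phi> \<in> borel_measurable borel" using m by (simp cong: measurable_cong_sets)
  let ?n = "normal_density \<mu> 1" and ?z = "normal_density 0 1"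
  have iG: "integrable (G \<nu>) f" if "f \<in> borel_measurable borel" "\<And>x. \<bar>f x\<bar> \<le> Bf" for f :: "real \<Rightarrow> real" and Bf \<nu>
    using that by (intro bounded_integrable[where B=Bf] prob_fin prob_G) (auto cong: measurable_cong_sets)
  have "integrable (G \<mu>) \<phi>" using iG[where f=\<phi> and Bf=Bd and \<nu>=\<mu>] Bd by auto
  then have i1: "integrable lborel (\<lambda>x. ?n x * \<phi> x)"
    unfolding G_def by (subst (asm) integrable_density) auto
  have "\<bar>exp (\<phi> x)\<bar> \<le> exp Bd" for x using Bd[of x] by (auto dest!: abs_le_D1)
  then have "integrable (G 0) (\<lambda>x. exp (\<phi> x))" using iG[where f="\<lambda>x. exp (\<phi> x)" and Bf="exp Bd" and \<nu>=0] by auto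
  then have i2: "integrable lborel (\<lambda>x. ?z x * exp (\<phi> x))"
    unfolding G_def by (subst (asm) integrable_density) auto
  have i3: "integrable lborel (\<lambda>x. ?n x * x)" by (rule integrable_normal_moment_nz_1) simp
  have i4: "integrable lborel ?n" by (rule integrable_normal_density) simp
  have I1: "(\<integral>x. \<phi> x \<partial>G \<mu>) = (\<integral>x. ?n x * \<phi> x \<partial>lborel)"
    unfolding G_def by (subst integral_density) auto
  have I2: "(\<integral>x. exp (\<phi> x) \<partial>G 0) = (\<integral>x. ?z x * exp (\<phi> x) \<partial>lborel)"
    unfolding G_def by (subst integral_density) auto
  have E: "0 < (\<integral>x. exp (\<phi> x) \<partial>G 0)"
  proof -
    have "exp (- Bd) \<le> (\<integral>x. exp (\<phi> x) \<partial>G 0)"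
      using Bd m' by (intro exp_integral_pos(1)[OF prob_G]) (auto cong: measurable_cong_sets)
    then show ?thesis by (meson exp_gt_zero less_le_trans)
  qed
  show "(\<integral>x. \<phi> x \<partial>G \<mu>) \<le> \<mu>^2/2 + ln (\<integral>x. exp (\<phi> x) \<partial>G 0)"
  proof (rule gibbs_shift[OF E])
    fix c
    have pw: "?n x * (\<phi> x - c) \<le> \<mu> * (?n x * x) - \<mu>^2/2 * ?n x + exp (- c) * (?z x * exp (\<phi> x)) - ?n x" for x
    proof -
      let ?r = "exp (\<mu> * x - \<mu>^2 / 2)"
      have "\<phi> x - c - (\<mu> * x - \<mu>^2 / 2) \<le> exp (\<phi> x - c - (\<mu> * x - \<mu>^2 / 2)) - 1"
        using exp_ge_add_one_self[of "\<phi> x - c - (\<mu> * x - \<mu>^2 / 2)"] by linarith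
      also have "exp (\<phi> x - c - (\<mu> * x - \<mu>^2 / 2)) = exp (- c) * exp (\<phi> x) / ?r"
        by (simp only: exp_diff exp_minus) (simp add: field_simps)
      finally have "?r * (\<phi> x - c - (\<mu> * x - \<mu>^2 / 2)) \<le> ?r * (exp (- c) * exp (\<phi> x) / ?r - 1)"
        by (intro mult_left_mono) auto
      then have "?r * (\<phi> x - c) \<le> ?r * (\<mu> * x - \<mu>^2 / 2) + exp (- c) * exp (\<phi> x) - ?r"
        by (simp add: algebra_simps)
      then have "?z x * (?r * (\<phi> x - c)) \<le> ?z x * (?r * (\<mu> * x - \<mu>^2 / 2) + exp (- c) * exp (\<phi> x) - ?r)"
        by (intro mult_left_mono) auto
      then show ?thesis unfolding nd_shift[of \<mu> x] by (simp add: algebra_simps)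
    qed
    have "(\<integral>x. \<phi> x \<partial>G \<mu>) - c = (\<integral>x. ?n x * (\<phi> x - c) \<partial>lborel)"
      unfolding I1 using i1 i4 by (simp add: right_diff_distrib)
    also have "\<dots> \<le> (\<integral>x. \<mu> * (?n x * x) - \<mu>^2/2 * ?n x + exp (- c) * (?z x * exp (\<phi> x)) - ?n x \<partial>lborel)"
      using i1 i2 i3 i4 pw by (intro integral_mono) (auto simp: right_diff_distrib)
    also have "\<dots> = \<mu> * \<mu> - \<mu>^2/2 + exp (- c) * (\<integral>x. exp (\<phi> x) \<partial>G 0) - 1"
      unfolding I2 using i2 i3 i4 by (simp add: integral_normal_moment_nz_1)
    finally show "(\<integral>x. \<phi> x \<partial>G \<mu>) - c \<le> \<mu>^2/2 + exp (- c) * (\<integral>x. exp (\<phi> x) \<partial>G 0) - 1"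
      by (simp add: power2_eq_square)
  qed
qed



lemma space_hist: "space hist_space = UNIV"
  unfolding hist_space_def by (simp add: space_PiM space_pair_measure)

lemma upd_meas[measurable]:
  assumes f[measurable]: "f \<in> L \<rightarrow>\<^sub>M hist_space" and a: "a \<in> L \<rightarrow>\<^sub>M count_space UNIV" and r[measurable]: "r \<in> L \<rightarrow>\<^sub>M borel"
  shows "(\<lambda>x. (f x)(t := (a x, r x))) \<in> L \<rightarrow>\<^sub>M hist_space"
  unfolding hist_space_def
proof (rule measurable_fun_upd[where J=UNIV])
  show "f \<in> L \<rightarrow>\<^sub>M (\<Pi>\<^sub>M i\<in>UNIV. count_space UNIV \<Otimes>\<^sub>M borel)" using f unfolding hist_space_def .
  show "(\<lambda>x. (a x, r x)) \<in> L \<rightarrow>\<^sub>M count_space UNIV \<Otimes>\<^sub>M borel" using a r by measurable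
qed simp

lemma G_kernel: "(\<lambda>a. G (mu a)) \<in> arms_space \<rightarrow>\<^sub>M prob_algebra borel"
  unfolding arms_space_def by (auto simp: space_prob_algebra prob_G)

lemma arms_to_UNIV: "(\<lambda>a. a) \<in> arms_space \<rightarrow>\<^sub>M count_space UNIV"
  unfolding arms_space_def by simp

definition stepK :: "(nat \<Rightarrow> real) \<Rightarrow> 'm policy \<Rightarrow> 'm \<Rightarrow> nat \<Rightarrow> (nat \<Rightarrow> nat \<times> real) \<Rightarrow> (nat \<Rightarrow> nat \<times> real) measure" where
  "stepK mu \<pi> m t h = \<pi> t (m, h) \<bind> (\<lambda>a. distr (G (mu a)) hist_space (\<lambda>r. h(t := (a, r))))"

lemma traj_Suc': "traj mu \<pi> m (Suc t) = traj mu \<pi> m t \<bind> (\<lambda>h. stepK mu \<pi> m t h)"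
  by (simp add: stepK_def G_def)

lemma stepK_meas2:
  assumes pm: "policy_measurable N \<pi>"
  shows "(\<lambda>(m, h). stepK mu \<pi> m t h) \<in> N \<Otimes>\<^sub>M hist_space \<rightarrow>\<^sub>M prob_algebra hist_space"
proof -
  have p[measurable]: "\<pi> t \<in> N \<Otimes>\<^sub>M hist_space \<rightarrow>\<^sub>M prob_algebra arms_space"
    using pm unfolding policy_measurable_def by blast
  have g: "(\<lambda>x. G (mu (snd x))) \<in> (N \<Otimes>\<^sub>M hist_space) \<Otimes>\<^sub>M arms_space \<rightarrow>\<^sub>M prob_algebra borel"
    by (rule measurable_compose[OF measurable_snd G_kernel])
  have a: "(\<lambda>x. snd (fst x)) \<in> ((N \<Otimes>\<^sub>M hist_space) \<Otimes>\<^sub>M arms_space) \<Otimes>\<^sub>M borel \<rightarrow>\<^sub>M count_space UNIV"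
    by (rule measurable_compose[OF _ arms_to_UNIV]) measurable
  have u: "(\<lambda>(x, r). (snd (fst x))(t := (snd x, r))) \<in> ((N \<Otimes>\<^sub>M hist_space) \<Otimes>\<^sub>M arms_space) \<Otimes>\<^sub>M borel \<rightarrow>\<^sub>M hist_space"
    unfolding case_prod_beta
    apply (rule upd_meas[where f="\<lambda>p. snd (fst (fst p))" and a="\<lambda>p. snd (fst p)" and r="snd"])
    subgoal by (rule measurable_compose[OF measurable_fst measurable_compose[OF measurable_fst measurable_snd]])
    subgoal by (rule a)
    subgoal by (rule measurable_snd)
    done
  have k: "(\<lambda>x. distr (G (mu (snd x))) hist_space (\<lambda>r. (snd (fst x))(t := (snd x, r)))) \<in> (N \<Otimes>\<^sub>M hist_space) \<Otimes>\<^sub>M arms_space \<rightarrow>\<^sub>M prob_algebra hist_space"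
    using measurable_distr_prob_space2[OF g u] by simp
  have "(\<lambda>x. \<pi> t x \<bind> (\<lambda>a. distr (G (mu a)) hist_space (\<lambda>r. (snd x)(t := (a, r))))) \<in> N \<Otimes>\<^sub>M hist_space \<rightarrow>\<^sub>M prob_algebra hist_space"
    by (rule measurable_bind_prob_space2[OF p]) (use k in \<open>simp add: case_prod_beta\<close>)
  moreover have "(\<lambda>(m, h). stepK mu \<pi> m t h) = (\<lambda>x. \<pi> t x \<bind> (\<lambda>a. distr (G (mu a)) hist_space (\<lambda>r. (snd x)(t := (a, r)))))"
    by (auto simp: fun_eq_iff stepK_def)
  ultimately show ?thesis by simp
qed

lemma stepK_meas:
  assumes pm: "policy_measurable N \<pi>" and m: "m \<in> space N"
  shows "stepK mu \<pi> m t \<in> hist_space \<rightarrow>\<^sub>M prob_algebra hist_space"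
  using measurable_compose[OF measurable_Pair[OF measurable_const[OF m] measurable_ident] stepK_meas2[OF pm]]
  by simp

lemma traj_meas:
  assumes pm: "policy_measurable N \<pi>"
  shows "(\<lambda>m. traj mu \<pi> m t) \<in> N \<rightarrow>\<^sub>M prob_algebra hist_space"
proof (induction t)
  case 0
  have "return hist_space (\<lambda>_. (0, 0)) \<in> space (prob_algebra hist_space)"
    by (auto simp: space_prob_algebra prob_space_return space_hist)
  then show ?case by simp
next
  case (Suc t)
  have "(\<lambda>m. traj mu \<pi> m t \<bind> (\<lambda>h. stepK mu \<pi> m t h)) \<in> N \<rightarrow>\<^sub>M prob_algebra hist_space"
    by (rule measurable_bind_prob_space2[OF Suc]) (use stepK_meas2[OF pm] in simp)
  then show ?case unfolding traj_Suc' .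
qed

lemma traj_prob:
  assumes pm: "policy_measurable N \<pi>" and m: "m \<in> space N"
  shows "prob_space (traj mu \<pi> m t)" "sets (traj mu \<pi> m t) = sets hist_space"
  using measurable_space[OF traj_meas[OF pm] m] by (auto simp: space_prob_algebra)



lemma upd_const_meas: "(\<lambda>r. h(t := (a, r))) \<in> borel \<rightarrow>\<^sub>M hist_space"
  by (rule upd_meas[where f="\<lambda>_. h" and a="\<lambda>_. a" and r="\<lambda>r. r"]) (auto simp: space_hist)

lemma distr_kernel:
  assumes "sets A = sets arms_space"
  shows "(\<lambda>a. distr (G (mu a)) hist_space (\<lambda>r. h(t := (a, r)))) \<in> A \<rightarrow>\<^sub>M prob_algebra hist_space"
proof -
  have "(\<lambda>a. distr (G (mu a)) hist_space (\<lambda>r. h(t := (a, r)))) \<in> arms_space \<rightarrow>\<^sub>M prob_algebra hist_space"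
    unfolding arms_space_def
    using upd_const_meas
    by (auto simp: space_prob_algebra intro!: prob_space.prob_space_distr prob_G cong: measurable_cong_sets)
  then show ?thesis using assms by (simp cong: measurable_cong_sets)
qed

lemma gibbs_stepK:
  assumes pm: "policy_measurable N \<pi>" and m: "m \<in> space N" and h: "h \<in> space hist_space"
    and c: "\<And>a. (mu a)^2 \<le> c"
  shows "gibbs (stepK mu \<pi> m t h) (stepK (\<lambda>_. 0) \<pi> m t h) (c / 2)"
proof -
  have p: "\<pi> t (m, h) \<in> space (prob_algebra arms_space)"
    using pm m h unfolding policy_measurable_def by (auto intro: measurable_space simp: space_pair_measure)
  then have pp: "prob_space (\<pi> t (m, h))" and ps: "sets (\<pi> t (m, h)) = sets arms_space"
    by (auto simp: space_prob_algebra)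
  have "gibbs (\<pi> t (m, h) \<bind> (\<lambda>a. distr (G (mu a)) hist_space (\<lambda>r. h(t := (a, r)))))
             (\<pi> t (m, h) \<bind> (\<lambda>a. distr (G ((\<lambda>_. 0) a)) hist_space (\<lambda>r. h(t := (a, r))))) (0 + c / 2)"
  proof (rule gibbs_bind[OF pp pp refl distr_kernel[OF ps] distr_kernel[OF ps] gibbs_self[OF pp]])
    fix a
    show "gibbs (distr (G (mu a)) hist_space (\<lambda>r. h(t := (a, r)))) (distr (G ((\<lambda>_. 0) a)) hist_space (\<lambda>r. h(t := (a, r)))) (c / 2)"
      using c[of a] by (intro gibbs_distr gibbs_mono[OF gibbs_G]) (auto simp: upd_const_meas cong: measurable_cong_sets)
  qed
  then show ?thesis by (simp add: stepK_def)
qed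

lemma gibbs_traj:
  assumes pm: "policy_measurable N \<pi>" and m: "m \<in> space N" and c: "\<And>a. (mu a)^2 \<le> c"
  shows "gibbs (traj mu \<pi> m t) (traj (\<lambda>_. 0) \<pi> m t) (real t * c / 2)"
proof (induction t)
  case 0
  show ?case using gibbs_self[OF prob_space_return[of "\<lambda>_. (0, 0)" hist_space]] by (simp add: space_hist)
next
  case (Suc t)
  have "gibbs (traj mu \<pi> m t \<bind> (\<lambda>h. stepK mu \<pi> m t h)) (traj (\<lambda>_. 0) \<pi> m t \<bind> (\<lambda>h. stepK (\<lambda>_. 0) \<pi> m t h)) (real t * c / 2 + c / 2)"
  proof (rule gibbs_bind[OF traj_prob(1)[OF pm m] traj_prob(1)[OF pm m] _ _ _ Suc])
    show "sets (traj (\<lambda>_. 0) \<pi> m t) = sets (traj mu \<pi> m t)" using traj_prob(2)[OF pm m] by simp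
    show "stepK mu \<pi> m t \<in> traj mu \<pi> m t \<rightarrow>\<^sub>M prob_algebra hist_space"
      using stepK_meas[OF pm m] traj_prob(2)[OF pm m] by (simp cong: measurable_cong_sets)
    show "stepK (\<lambda>_. 0) \<pi> m t \<in> traj mu \<pi> m t \<rightarrow>\<^sub>M prob_algebra hist_space"
      using stepK_meas[OF pm m] traj_prob(2)[OF pm m] by (simp cong: measurable_cong_sets)
    fix h assume "h \<in> space (traj mu \<pi> m t)"
    then show "gibbs (stepK mu \<pi> m t h) (stepK (\<lambda>_. 0) \<pi> m t h) (c / 2)"
      using gibbs_stepK[OF pm m _ c] by (simp add: space_hist)
  qed
  then show ?case unfolding traj_Suc' by (simp add: field_simps)
qed



lemma two: "2 * (ennreal (1/2) * z) = z"
proof -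
  have "ennreal 2 * ennreal (1/2) = 1" by (subst ennreal_mult[symmetric]) auto
  then show ?thesis by (metis mult.assoc mult_1 ennreal_numeral)
qed
lemma rho_ineq: "0 \<le> \<rho> \<Longrightarrow> \<rho> * (\<psi> - c) \<le> \<rho> * ln \<rho> + exp (- c) * exp \<psi> - (\<rho>::real)"
proof (cases "\<rho> = 0")
  case True then show ?thesis by simp
next
  case False
  assume "0 \<le> \<rho>" then have r: "0 < \<rho>" using False by simp
  have "\<psi> - c - ln \<rho> \<le> exp (\<psi> - c - ln \<rho>) - 1" using exp_ge_add_one_self[of "\<psi> - c - ln \<rho>"] by linarith
  also have "exp (\<psi> - c - ln \<rho>) = exp (- c) * exp \<psi> / \<rho>" using r by (simp only: exp_diff exp_minus exp_ln) (simp add: field_simps)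
  finally have "\<rho> * (\<psi> - c - ln \<rho>) \<le> \<rho> * (exp (- c) * exp \<psi> / \<rho> - 1)" using r by (intro mult_left_mono) auto
  then show ?thesis using r by (simp add: algebra_simps)
qed
lemma rho_ln_bound: "0 \<le> \<rho> \<Longrightarrow> \<rho> \<le> 2 \<Longrightarrow> \<bar>\<rho> * ln \<rho>\<bar> \<le> (2::real)"
proof -
  assume a: "0 \<le> \<rho>" "\<rho> \<le> 2"
  consider "\<rho> = 0" | "0 < \<rho>" "\<rho> \<le> 1" | "1 \<le> \<rho>" using a by linarith
  then show ?thesis
  proof cases
    case 1 then show ?thesis by simp
  next
    case 2
    have "ln (1/\<rho>) \<le> 1/\<rho> - 1" using 2 by (intro ln_le_minus_one) auto
    then have "- ln \<rho> \<le> 1/\<rho> - 1" using 2 by (simp add: ln_div)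
    then have "\<rho> * (- ln \<rho>) \<le> \<rho> * (1/\<rho> - 1)" using 2 by (intro mult_left_mono) auto
    also have "\<rho> * (1/\<rho> - 1) = 1 - \<rho>" using 2 by (simp add: field_simps)
    finally have x: "\<rho> * (- ln \<rho>) \<le> 1 - \<rho>" .
    have "ln \<rho> \<le> 0" using 2 by simp
    then have "\<rho> * ln \<rho> \<le> 0" using 2 by (simp add: mult_nonneg_nonpos)
    then have "\<bar>\<rho> * ln \<rho>\<bar> = \<rho> * (- ln \<rho>)" by simp
    then show ?thesis using x 2 by linarith
  next
    case 3
    have "ln \<rho> \<le> \<rho> - 1" using 3 by (intro ln_le_minus_one) auto
    moreover have "0 \<le> ln \<rho>" using 3 by simp
    ultimately have "\<rho> * ln \<rho> \<le> 2 * 1" using a by (intro mult_mono) auto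
    then show ?thesis using 3 \<open>0 \<le> ln \<rho>\<close> by simp
  qed
qed

context
  fixes P :: "'w measure" and N :: "'m measure" and X :: "'w \<Rightarrow> 'm" and Y :: "'w \<Rightarrow> nat"
  assumes P: "prob_space P" and X[measurable]: "X \<in> P \<rightarrow>\<^sub>M N" and Y[measurable]: "Y \<in> P \<rightarrow>\<^sub>M arms_space"
    and Y1: "measure P {\<omega> \<in> space P. Y \<omega> = 1} = 1/2" and Y2: "measure P {\<omega> \<in> space P. Y \<omega> = 2} = 1/2"
begin

interpretation P: prob_space P by (rule P)

lemma Y_vals: "\<omega> \<in> space P \<Longrightarrow> Y \<omega> \<in> {1, 2}"
  using measurable_space[OF Y] by (auto simp: arms_space_def)

lemma U_prob: "prob_space (distr P arms_space Y)"
  by (rule P.prob_space_distr) simp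

lemma U_space: "space (distr P arms_space Y) = {1, 2}"
  by (simp add: arms_space_def)

lemma U_nn: "(\<integral>\<^sup>+y. f y \<partial>distr P arms_space Y) = ennreal (1/2) * (f 1 + f 2)"
proof -
  have m1: "{\<omega> \<in> space P. Y \<omega> = 1} \<in> sets P" and m2: "{\<omega> \<in> space P. Y \<omega> = 2} \<in> sets P"
    using Y unfolding arms_space_def by measurable
  have e1: "emeasure P {\<omega> \<in> space P. Y \<omega> = 1} = ennreal (1/2)" by (simp only: P.emeasure_eq_measure Y1)
  have e2: "emeasure P {\<omega> \<in> space P. Y \<omega> = 2} = ennreal (1/2)" by (simp only: P.emeasure_eq_measure Y2)
  have "(\<integral>\<^sup>+y. f y \<partial>distr P arms_space Y) = (\<integral>\<^sup>+\<omega>. f (Y \<omega>) \<partial>P)"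
    by (subst nn_integral_distr) (use Y in \<open>auto simp: arms_space_def\<close>)
  also have "\<dots> = (\<integral>\<^sup>+\<omega>. f 1 * indicator {\<omega> \<in> space P. Y \<omega> = 1} \<omega> + f 2 * indicator {\<omega> \<in> space P. Y \<omega> = 2} \<omega> \<partial>P)"
    by (intro nn_integral_cong) (auto dest: Y_vals simp: indicator_def)
  also have "\<dots> = f 1 * emeasure P {\<omega> \<in> space P. Y \<omega> = 1} + f 2 * emeasure P {\<omega> \<in> space P. Y \<omega> = 2}"
    using m1 m2 by (simp add: nn_integral_add nn_integral_cmult_indicator)
  also have "\<dots> = ennreal (1/2) * (f 1 + f 2)"
    unfolding e1 e2 by (simp add: distrib_left mult.commute)
  finally show ?thesis .
qed

lemma U_int: "(\<integral>y. (f y :: real) \<partial>distr P arms_space Y) = (f 1 + f 2) / 2"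
proof -
  have m1: "{\<omega> \<in> space P. Y \<omega> = 1} \<in> sets P" and m2: "{\<omega> \<in> space P. Y \<omega> = 2} \<in> sets P"
    using Y unfolding arms_space_def by measurable
  have "(\<integral>y. f y \<partial>distr P arms_space Y) = (\<integral>\<omega>. f (Y \<omega>) \<partial>P)"
    by (subst integral_distr) (use Y in \<open>auto simp: arms_space_def\<close>)
  also have "\<dots> = (\<integral>\<omega>. f 1 * indicator {\<omega> \<in> space P. Y \<omega> = 1} \<omega> + f 2 * indicator {\<omega> \<in> space P. Y \<omega> = 2} \<omega> \<partial>P)"
    by (intro Bochner_Integration.integral_cong) (auto dest: Y_vals simp: indicator_def)
  also have "\<dots> = f 1 * measure P {\<omega> \<in> space P. Y \<omega> = 1} + f 2 * measure P {\<omega> \<in> space P. Y \<omega> = 2}"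
    using m1 m2 by (subst Bochner_Integration.integral_add) (auto intro!: integrable_mult_right simp: P.emeasure_eq_measure)
  also have "\<dots> = (f 1 + f 2) / 2"
    unfolding Y1 Y2 by simp
  finally show ?thesis .
qed


lemma J_le:
  assumes S: "S \<in> sets (N \<Otimes>\<^sub>M arms_space)"
  shows "emeasure (distr P (N \<Otimes>\<^sub>M arms_space) (\<lambda>\<omega>. (X \<omega>, Y \<omega>))) S
         \<le> 2 * emeasure (distr P N X \<Otimes>\<^sub>M distr P arms_space Y) S"
proof -
  let ?L = "distr P N X" and ?U = "distr P arms_space Y"
  interpret U: prob_space ?U by (rule U_prob)
  have S': "S \<in> sets (?L \<Otimes>\<^sub>M ?U)" using S by (simp cong: sets_pair_measure_cong)
  have eU: "emeasure ?U (Pair x -` S) = ennreal (1/2) * (indicator (Pair x -` S) 1 + indicator (Pair x -` S) 2)" for x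
    using U_nn[of "indicator (Pair x -` S)"] sets_Pair1[OF S'] by (simp add: nn_integral_indicator)
  have "emeasure (distr P (N \<Otimes>\<^sub>M arms_space) (\<lambda>\<omega>. (X \<omega>, Y \<omega>))) S = (\<integral>\<^sup>+\<omega>. indicator S (X \<omega>, Y \<omega>) \<partial>P)"
    using S by (subst emeasure_distr) (auto simp: nn_integral_indicator[symmetric] intro!: nn_integral_cong simp: indicator_def)
  also have "\<dots> \<le> (\<integral>\<^sup>+\<omega>. 2 * emeasure ?U (Pair (X \<omega>) -` S) \<partial>P)"
  proof (intro nn_integral_mono)
    fix \<omega> assume "\<omega> \<in> space P"
    then have "Y \<omega> \<in> {1, 2}" by (rule Y_vals)
    then have "indicator S (X \<omega>, Y \<omega>) \<le> (indicator (Pair (X \<omega>) -` S) 1 + indicator (Pair (X \<omega>) -` S) 2 :: ennreal)"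
      by (auto simp: indicator_def)
    then show "indicator S (X \<omega>, Y \<omega>) \<le> 2 * emeasure ?U (Pair (X \<omega>) -` S)"
      unfolding eU two .
  qed
  also have "\<dots> = 2 * (\<integral>\<^sup>+\<omega>. emeasure ?U (Pair (X \<omega>) -` S) \<partial>P)"
    using U.measurable_emeasure_Pair[OF S'] by (subst nn_integral_cmult) (auto intro: measurable_compose[OF X] simp: cong: measurable_cong_sets)
  also have "(\<integral>\<^sup>+\<omega>. emeasure ?U (Pair (X \<omega>) -` S) \<partial>P) = (\<integral>\<^sup>+x. emeasure ?U (Pair x -` S) \<partial>?L)"
    using U.measurable_emeasure_Pair[OF S'] by (subst nn_integral_distr) (auto cong: measurable_cong_sets)
  also have "\<dots> = emeasure (?L \<Otimes>\<^sub>M ?U) S"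
    using U.emeasure_pair_measure_alt[OF S'] by simp
  finally show ?thesis .
qed


lemma mi_gibbs:
  assumes psi[measurable]: "\<psi> \<in> borel_measurable (N \<Otimes>\<^sub>M arms_space)"
    and B: "\<And>z. z \<in> space (N \<Otimes>\<^sub>M arms_space) \<Longrightarrow> \<bar>\<psi> z\<bar> \<le> Bd"
  shows "(\<integral>\<omega>. \<psi> (X \<omega>, Y \<omega>) \<partial>P) \<le> prob_space.mutual_information P (exp 1) N arms_space X Y
           + ln (\<integral>x. (exp (\<psi> (x, 1)) + exp (\<psi> (x, 2))) / 2 \<partial>distr P N X)"
proof -
  let ?L = "distr P N X" and ?U = "distr P arms_space Y"
  let ?J = "distr P (N \<Otimes>\<^sub>M arms_space) (\<lambda>\<omega>. (X \<omega>, Y \<omega>))"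
  let ?Pr = "?L \<Otimes>\<^sub>M ?U"
  interpret L: prob_space ?L by (rule P.prob_space_distr) simp
  interpret U: prob_space ?U by (rule U_prob)
  interpret LU: pair_prob_space ?L ?U by unfold_locales
  interpret J: prob_space ?J by (rule P.prob_space_distr) simp
  have sPr: "sets ?Pr = sets (N \<Otimes>\<^sub>M arms_space)" by (simp cong: sets_pair_measure_cong)
  have spPr: "space ?Pr = space (N \<Otimes>\<^sub>M arms_space)" using sPr by (rule sets_eq_imp_space_eq)
  have sJ: "sets ?J = sets ?Pr" using sPr by simp
  have psiPr[measurable]: "\<psi> \<in> borel_measurable ?Pr" using psi sPr by (simp cong: measurable_cong_sets)
  have ac: "absolutely_continuous ?Pr ?J"
    unfolding absolutely_continuous_def
  proof
    fix A assume "A \<in> null_sets ?Pr"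
    then have A: "A \<in> sets (N \<Otimes>\<^sub>M arms_space)" "emeasure ?Pr A = 0" using sPr by auto
    then have "emeasure ?J A \<le> 0" using J_le[OF A(1)] by simp
    then show "A \<in> null_sets ?J" using A by auto
  qed
  define r where "r = RN_deriv ?Pr ?J"
  have rm[measurable]: "r \<in> borel_measurable ?Pr" unfolding r_def by simp
  have Jd: "density ?Pr r = ?J" unfolding r_def by (rule LU.density_RN_deriv[OF ac sJ])
  have r2: "AE x in ?Pr. r x \<le> 2"
  proof -
    define S2 where "S2 = {x \<in> space ?Pr. 2 < r x}"
    have S2m[measurable]: "S2 \<in> sets ?Pr" unfolding S2_def by measurable
    have S2N: "S2 \<in> sets (N \<Otimes>\<^sub>M arms_space)" by (metis sPr S2m)
    have eJ: "emeasure ?J S2 = (\<integral>\<^sup>+x. r x * indicator S2 x \<partial>?Pr)"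
      unfolding Jd[symmetric] by (rule emeasure_density) (auto simp: S2N)
    have eP: "(\<integral>\<^sup>+x. 2 * indicator S2 x \<partial>?Pr) = 2 * emeasure ?Pr S2"
      using S2m by (rule nn_integral_cmult_indicator)
    have "AE x in ?Pr. r x * indicator S2 x \<le> 2 * indicator S2 x"
    proof (rule ccontr)
      assume na: "\<not> (AE x in ?Pr. r x * indicator S2 x \<le> 2 * indicator S2 x)"
      have "(\<integral>\<^sup>+x. 2 * indicator S2 x \<partial>?Pr) < (\<integral>\<^sup>+x. r x * indicator S2 x \<partial>?Pr)"
      proof (rule nn_integral_less)
        show "(\<integral>\<^sup>+x. 2 * indicator S2 x \<partial>?Pr) \<noteq> \<infinity>" unfolding eP using LU.emeasure_finite[of S2] by (simp add: ennreal_mult_eq_top_iff)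
        show "AE x in ?Pr. 2 * indicator S2 x \<le> r x * (indicator S2 x :: ennreal)"
          by (intro AE_I2) (auto simp: S2_def indicator_def less_imp_le)
      qed (use na in auto)
      moreover have "emeasure ?J S2 \<le> 2 * emeasure ?Pr S2" using J_le[OF S2N] .
      ultimately show False unfolding eJ eP by simp
    qed
    then show ?thesis using AE_space[of ?Pr]
      by eventually_elim (auto simp: S2_def indicator_def not_less[symmetric] split: if_splits)
  qed
  define \<rho> where "\<rho> x = enn2real (r x)" for x
  have \<rho>m[measurable]: "\<rho> \<in> borel_measurable ?Pr" unfolding \<rho>_def by measurable
  have \<rho>0: "0 \<le> \<rho> x" for x unfolding \<rho>_def by simp
  have \<rho>2: "AE x in ?Pr. \<rho> x \<le> 2" using r2
    by eventually_elim (auto simp: \<rho>_def enn2real_leI)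
  have r\<rho>: "AE x in ?Pr. r x = ennreal (\<rho> x)" using r2
    by eventually_elim (auto simp: \<rho>_def ennreal_enn2real_if top_unique)
  have Jd': "?J = density ?Pr (\<lambda>x. ennreal (\<rho> x))"
    unfolding Jd[symmetric] by (rule density_cong) (use r\<rho> in auto)
  have intJ: "(\<integral>x. f x \<partial>?J) = (\<integral>x. \<rho> x * f x \<partial>?Pr)" if [measurable]: "f \<in> borel_measurable ?Pr" for f :: "_ \<Rightarrow> real"
    unfolding Jd' by (subst integral_density) (auto simp: \<rho>0)
  have MI: "prob_space.mutual_information P (exp 1) N arms_space X Y = (\<integral>x. \<rho> x * ln (\<rho> x) \<partial>?Pr)"
  proof -
    have "prob_space.mutual_information P (exp 1) N arms_space X Y = (\<integral>x. ln (\<rho> x) \<partial>?J)"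
      unfolding prob_space.mutual_information_def[OF P] KL_divergence_def entropy_density_def r_def[symmetric]
      by (simp add: log_def \<rho>_def comp_def)
    also have "\<dots> = (\<integral>x. \<rho> x * ln (\<rho> x) \<partial>?Pr)" by (rule intJ) measurable
    finally show ?thesis .
  qed
  have int1: "integrable ?Pr f" if "f \<in> borel_measurable ?Pr" "AE x in ?Pr. \<bar>f x\<bar> \<le> Cb" for f :: "_ \<Rightarrow> real" and Cb
    using that by (intro LU.integrable_const_bound[where B=Cb]) auto
  have Bd': "AE x in ?Pr. \<bar>\<psi> x\<bar> \<le> Bd" using B spPr by (intro AE_I2) auto
  have i_rho: "integrable ?Pr \<rho>" using \<rho>2 \<rho>0 by (intro int1[of _ "2"]) auto
  have i_rholn: "integrable ?Pr (\<lambda>x. \<rho> x * ln (\<rho> x))" using \<rho>2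
    by (intro int1[of _ "2"]) (auto elim!: eventually_mono intro: rho_ln_bound \<rho>0)
  have i_rhopsi: "integrable ?Pr (\<lambda>x. \<rho> x * \<psi> x)" using \<rho>2 Bd'
  proof (intro int1[of _ "2 * Bd"])
    show "AE x in ?Pr. \<bar>\<rho> x * \<psi> x\<bar> \<le> 2 * Bd" using \<rho>2 Bd'
    proof eventually_elim
      case (elim x) then show ?case using \<rho>0[of x] by (simp add: abs_mult mult_mono)
    qed
  qed simp
  have i_exp: "integrable ?Pr (\<lambda>x. exp (\<psi> x))" using Bd'
    by (intro int1[of _ "exp Bd"]) (auto elim!: eventually_mono dest!: abs_le_D1)
  have rho1: "(\<integral>x. \<rho> x \<partial>?Pr) = 1" using intJ[of "\<lambda>_. 1"] J.prob_space[simplified] by simp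
  define E where "E = (\<integral>x. exp (\<psi> x) \<partial>?Pr)"
  have E_eq: "E = (\<integral>x. (exp (\<psi> (x, 1)) + exp (\<psi> (x, 2))) / 2 \<partial>?L)"
    unfolding E_def using LU.integral_fst'[OF i_exp, symmetric] by (simp add: U_int)
  have E_pos: "0 < E"
  proof -
    have "exp (- Bd) \<le> E" unfolding E_def
      using B spPr by (intro exp_integral_pos(1)[of ?Pr \<psi> Bd]) (auto simp: LU.prob_space_axioms)
    then show ?thesis by (meson exp_gt_zero less_le_trans)
  qed
  have "(\<integral>\<omega>. \<psi> (X \<omega>, Y \<omega>) \<partial>P) = (\<integral>x. \<psi> x \<partial>?J)"
    by (subst integral_distr) auto
  also have "\<dots> = (\<integral>x. \<rho> x * \<psi> x \<partial>?Pr)" by (rule intJ) simp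
  also have "\<dots> \<le> (\<integral>x. \<rho> x * ln (\<rho> x) \<partial>?Pr) + ln E"
  proof (rule gibbs_shift[OF E_pos])
    fix c
    have "(\<integral>x. \<rho> x * \<psi> x \<partial>?Pr) - c = (\<integral>x. \<rho> x * (\<psi> x - c) \<partial>?Pr)"
      using i_rho i_rhopsi rho1 by (simp add: right_diff_distrib)
    also have "\<dots> \<le> (\<integral>x. \<rho> x * ln (\<rho> x) + exp (- c) * exp (\<psi> x) - \<rho> x \<partial>?Pr)"
      using i_rho i_rhopsi i_rholn i_exp by (intro integral_mono rho_ineq \<rho>0) (auto simp: right_diff_distrib)
    also have "\<dots> = (\<integral>x. \<rho> x * ln (\<rho> x) \<partial>?Pr) + exp (- c) * E - 1"
      unfolding E_def using i_rho i_rholn i_exp rho1 by simp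
    finally show "(\<integral>x. \<rho> x * \<psi> x \<partial>?Pr) - c \<le> (\<integral>x. \<rho> x * ln (\<rho> x) \<partial>?Pr) + exp (- c) * E - 1" .
  qed
  finally show ?thesis unfolding MI E_eq .
qed

end


lemma two_point_aux:
  fixes l x :: real
  assumes l: "0 \<le> l" and x: "0 \<le> x" "x \<le> 1/2"
  shows "(exp (l * x) + exp (l * (1 - x))) / 2 \<le> exp (l / 2 + l^2 / 8)"
proof -
  define h where "h = l * (1 - 2 * x)"
  have h0: "0 \<le> h" unfolding h_def using l x by auto
  have "- h * (1/2) + ln (1 + (1/2) * (exp h - 1)) \<le> h^2 / 8"
    using Hoeffdings_lemma_aux[OF h0, of "1/2"] by simp
  then have "ln ((1 + exp h) / 2) \<le> h / 2 + h^2 / 8" by (simp add: field_simps)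
  then have "(1 + exp h) / 2 \<le> exp (h / 2 + h^2 / 8)"
    by (metis exp_le_cancel_iff exp_ln add_pos_pos exp_gt_zero half_gt_zero zero_less_one)
  then have "exp (l * x) * ((1 + exp h) / 2) \<le> exp (l * x) * exp (h / 2 + h^2 / 8)"
    by (intro mult_left_mono) auto
  moreover have "exp (l * x) * ((1 + exp h) / 2) = (exp (l * x) + exp (l * (1 - x))) / 2"
    unfolding h_def by (simp add: field_simps flip: exp_add)
  moreover have "exp (l * x) * exp (h / 2 + h^2 / 8) = exp (l / 2 + h^2 / 8)"
    unfolding h_def by (simp add: field_simps flip: exp_add)
  moreover have "h^2 \<le> l^2" unfolding h_def using l x
    by (intro power_mono) (auto simp: abs_mult intro!: mult_left_le)
  moreover have "exp (l / 2 + h^2 / 8) \<le> exp (l / 2 + l^2 / 8)" using \<open>h^2 \<le> l^2\<close> by simp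
  ultimately show ?thesis by linarith
qed

lemma two_point:
  fixes l x :: real
  assumes l: "0 \<le> l" and x: "0 \<le> x" "x \<le> 1"
  shows "(exp (l * x) + exp (l * (1 - x))) / 2 \<le> exp (l / 2 + l^2 / 8)"
proof (cases "x \<le> 1/2")
  case True then show ?thesis using two_point_aux[OF l x(1)] by simp
next
  case False
  then show ?thesis using two_point_aux[OF l, of "1 - x"] x by (simp add: add.commute)
qed

lemma best_arm_one: "\<Delta> > 0 \<Longrightarrow> best_arm (mu_one \<Delta>) = 1"
  unfolding best_arm_def arg_max_def is_arg_max_def mu_one_def
  by (rule some_equality) auto

lemma best_arm_two: "\<Delta> > 0 \<Longrightarrow> best_arm (mu_two \<Delta>) = 2"
  unfolding best_arm_def arg_max_def is_arg_max_def mu_two_def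
  by (rule some_equality) auto

definition nA :: "nat \<Rightarrow> (nat \<Rightarrow> nat \<times> real) \<Rightarrow> real" where
  "nA T h = (\<Sum>t<T. if fst (h t) = 1 then 1 else 0)"

definition phi :: "real \<Rightarrow> nat \<Rightarrow> nat \<Rightarrow> (nat \<Rightarrow> nat \<times> real) \<Rightarrow> real" where
  "phi l T a h = (if a = 1 then l * (nA T h / T) else l * (1 - nA T h / T))"

lemma fst_h_meas[measurable]: "(\<lambda>h. fst (h t)) \<in> hist_space \<rightarrow>\<^sub>M count_space UNIV"
  unfolding hist_space_def by measurable

lemma nA_meas[measurable]: "nA T \<in> borel_measurable hist_space"
  unfolding nA_def by measurable

lemma nA_bounds: "0 \<le> nA T h" "nA T h \<le> T"
proof -
  show "0 \<le> nA T h" unfolding nA_def by (intro sum_nonneg) auto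
  have "nA T h \<le> (\<Sum>t<T. 1)" unfolding nA_def by (intro sum_mono) auto
  then show "nA T h \<le> T" by simp
qed

lemma phi_meas[measurable]: "phi l T a \<in> borel_measurable hist_space"
  unfolding phi_def by measurable

lemma phi_bounds:
  assumes "0 \<le> l" "T > 0"
  shows "\<bar>phi l T a h\<bar> \<le> l" "0 \<le> phi l T a h"
proof -
  define q where "q = nA T h / T"
  have a: "0 \<le> q" "q \<le> 1" using nA_bounds[of T h] assms by (auto simp: field_simps q_def)
  have p: "phi l T a h = (if a = 1 then l * q else l * (1 - q))" by (simp add: phi_def q_def)
  have "0 \<le> phi l T a h \<and> phi l T a h \<le> l"
    unfolding p using a assms by (auto intro: mult_left_le)
  then show "\<bar>phi l T a h\<bar> \<le> l" "0 \<le> phi l T a h" by auto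
qed

lemma regret_one:
  assumes "\<Delta> > 0" "l > 0" "T > 0"
  shows "(\<Sum>t<T. Max (mu_one \<Delta> ` {1, 2}) - mu_one \<Delta> (fst (h t))) = \<Delta> * T - (\<Delta> * T / l) * phi l T 1 h"
proof -
  have M: "Max (mu_one \<Delta> ` {1, 2}) = \<Delta>" using assms by (simp add: mu_one_def)
  have "(\<Sum>t<T. \<Delta> - mu_one \<Delta> (fst (h t))) = (\<Sum>t<T. \<Delta> - \<Delta> * (if fst (h t) = 1 then 1 else 0))"
    by (intro sum.cong) (auto simp: mu_one_def)
  also have "\<dots> = \<Delta> * T - \<Delta> * nA T h" by (simp add: nA_def sum_subtractf sum_distrib_left)
  also have "\<dots> = \<Delta> * T - (\<Delta> * T / l) * phi l T 1 h" using assms by (simp add: phi_def field_simps)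
  finally show ?thesis unfolding M .
qed

lemma regret_two:
  assumes "\<Delta> > 0" "l > 0" "T > 0"
  shows "(\<Sum>t<T. Max (mu_two \<Delta> ` {1, 2}) - mu_two \<Delta> (fst (h t))) = \<Delta> * T - (\<Delta> * T / l) * phi l T 2 h"
proof -
  have M: "Max (mu_two \<Delta> ` {1, 2}) = 0" using assms by (simp add: mu_two_def)
  have "(\<Sum>t<T. 0 - mu_two \<Delta> (fst (h t))) = (\<Sum>t<T. \<Delta> * (if fst (h t) = 1 then 1 else 0))"
    by (intro sum.cong) (auto simp: mu_two_def)
  also have "\<dots> = \<Delta> * nA T h" by (simp add: nA_def sum_distrib_left)
  also have "\<dots> = \<Delta> * T - (\<Delta> * T / l) * phi l T 2 h" using assms by (simp add: phi_def field_simps)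
  finally show ?thesis unfolding M .
qed



lemma ln_le_exp: "0 < (a::real) \<Longrightarrow> a \<le> exp b \<Longrightarrow> ln a \<le> b"
  by (metis ln_exp ln_le_cancel_iff exp_gt_zero)

theorem lemma1:
  fixes P :: "'w measure" and N :: "'m measure"
    and mu :: "'w \<Rightarrow> nat \<Rightarrow> real" and M :: "'w \<Rightarrow> 'm"
    and \<pi> :: "'m policy" and \<Delta> :: real and T :: nat
  assumes "prob_space P"
    and "\<Delta> > 0" and "T \<ge> 1"
    and "mu \<in> P \<rightarrow>\<^sub>M count_space {mu_one \<Delta>, mu_two \<Delta>}"
    and "measure P {\<omega> \<in> space P. mu \<omega> = mu_one \<Delta>} = 1/2"
    and "measure P {\<omega> \<in> space P. mu \<omega> = mu_two \<Delta>} = 1/2"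
    and "M \<in> P \<rightarrow>\<^sub>M N"
    and "prob_space.mutual_information P (exp 1) N arms_space M (\<lambda>\<omega>. best_arm (mu \<omega>)) \<le> 1/16"
    and "policy_measurable N \<pi>"
  shows "(\<integral>\<omega>. cond_regret \<pi> (mu \<omega>) (M \<omega>) T \<partial>P)
           \<ge> \<Delta> * T * (1/2 - sqrt (1/2 * (1/16 + 4 * T * \<Delta>^2)))"
proof -
  interpret P: prob_space P by (rule assms(1))
  have D: "\<Delta> > 0" by (rule assms(2))
  have Tpos: "T > 0" using assms(3) by simp
  have pm: "policy_measurable N \<pi>" by (rule assms(9))
  have Mm[measurable]: "M \<in> P \<rightarrow>\<^sub>M N" by (rule assms(7))
  let ?m1 = "mu_one \<Delta>" and ?m2 = "mu_two \<Delta>"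
  let ?Y = "\<lambda>\<omega>. best_arm (mu \<omega>)"
  define K where "K = 1/16 + T * \<Delta>^2 / 2"
  define l where "l = sqrt (8 * K)"
  have K0: "K > 0" unfolding K_def by (simp add: add_pos_nonneg)
  have l0: "l > 0" unfolding l_def using K0 by simp
  have l2: "l^2 = 8 * K" unfolding l_def using K0 by simp
  have neq: "?m1 \<noteq> ?m2" using D by (metis mu_one_def mu_two_def neg_equal_zero less_irrefl)
  have mu_vals: "mu \<omega> = ?m1 \<or> mu \<omega> = ?m2" if "\<omega> \<in> space P" for \<omega>
    using measurable_space[OF assms(4) that] by auto
  have Yv: "?Y \<omega> = (if mu \<omega> = ?m1 then 1 else 2)" if "\<omega> \<in> space P" for \<omega>
    using mu_vals[OF that] best_arm_one[OF D] best_arm_two[OF D] neq by auto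
  have Y1iff: "?Y \<omega> = 1 \<longleftrightarrow> mu \<omega> = ?m1" if "\<omega> \<in> space P" for \<omega>
    using Yv[OF that] by simp
  have Ym[measurable]: "?Y \<in> P \<rightarrow>\<^sub>M arms_space"
  proof (rule measurable_compose[OF assms(4)])
    show "best_arm \<in> count_space {?m1, ?m2} \<rightarrow>\<^sub>M arms_space"
      using best_arm_one[OF D] best_arm_two[OF D] by (auto simp: arms_space_def)
  qed
  have Y1: "measure P {\<omega> \<in> space P. ?Y \<omega> = 1} = 1/2"
  proof -
    have "{\<omega> \<in> space P. ?Y \<omega> = 1} = {\<omega> \<in> space P. mu \<omega> = ?m1}" using Y1iff by blast
    then show ?thesis using assms(5) by simp
  qed
  have Y2: "measure P {\<omega> \<in> space P. ?Y \<omega> = 2} = 1/2"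
  proof -
    have "{\<omega> \<in> space P. ?Y \<omega> = 2} = {\<omega> \<in> space P. mu \<omega> = ?m2}" using Yv neq mu_vals by fastforce
    then show ?thesis using assms(6) by simp
  qed
  have Emu: "{\<omega> \<in> space P. mu \<omega> = ?m1} \<in> sets P"
  proof -
    have "{\<omega> \<in> space P. mu \<omega> = ?m1} = mu -` {?m1} \<inter> space P" by auto
    then show ?thesis using measurable_sets[OF assms(4), of "{?m1}"] by auto
  qed
  have trajm: "(\<lambda>m. traj v \<pi> m T) \<in> N \<rightarrow>\<^sub>M subprob_algebra hist_space" for v
    using traj_meas[OF pm] by (rule measurable_prob_algebraD)
  define Z where "Z a m = (\<integral>h. exp (phi l T a h) \<partial>traj (\<lambda>_. 0) \<pi> m T)" for a m
  have Zm[measurable]: "Z a \<in> borel_measurable N" for a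
    unfolding Z_def by (rule measurable_compose[OF trajm integral_measurable_subprob_algebra]) measurable
  have Zb: "exp (- l) \<le> Z a m \<and> Z a m \<le> exp l" if m: "m \<in> space N" for a m
  proof -
    have "phi l T a \<in> borel_measurable (traj (\<lambda>_. 0) \<pi> m T)"
      using traj_prob(2)[OF pm m] by (simp cong: measurable_cong_sets)
    then show ?thesis unfolding Z_def
      using exp_integral_pos[OF traj_prob(1)[OF pm m], where \<phi>="phi l T a" and B=l] phi_bounds(1)[OF less_imp_le[OF l0] Tpos]
      by auto
  qed
  have Zpos: "0 < Z a m" if "m \<in> space N" for a m using Zb[OF that, of a] by (meson exp_gt_zero less_le_trans)
  define \<psi> where "\<psi> z = ln (Z (snd z) (fst z))" for z
  have \<psi>m: "\<psi> \<in> borel_measurable (N \<Otimes>\<^sub>M arms_space)"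
  proof -
    have "(\<lambda>z. if snd z = 1 then ln (Z 1 (fst z)) else ln (Z 2 (fst z))) \<in> borel_measurable (N \<Otimes>\<^sub>M arms_space)"
    proof (rule measurable_If)
      have "{z \<in> space (N \<Otimes>\<^sub>M arms_space). snd z = 1} = snd -` {1} \<inter> space (N \<Otimes>\<^sub>M arms_space)" by auto
      then show "{z \<in> space (N \<Otimes>\<^sub>M arms_space). snd z = 1} \<in> sets (N \<Otimes>\<^sub>M arms_space)"
        using measurable_sets[OF measurable_snd[of N arms_space], of "{1}"] by (auto simp: arms_space_def)
    qed measurable
    moreover have "z \<in> space (N \<Otimes>\<^sub>M arms_space) \<Longrightarrow> \<psi> z = (if snd z = 1 then ln (Z 1 (fst z)) else ln (Z 2 (fst z)))" for z
      by (auto simp: \<psi>_def space_pair_measure arms_space_def)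
    ultimately show ?thesis by (simp cong: measurable_cong)
  qed
  have \<psi>b: "\<bar>\<psi> z\<bar> \<le> l" if "z \<in> space (N \<Otimes>\<^sub>M arms_space)" for z
  proof -
    have m: "fst z \<in> space N" using that by (auto simp: space_pair_measure)
    have p: "0 < Z (snd z) (fst z)" by (rule Zpos[OF m])
    have "ln (exp (- l)) \<le> \<psi> z" "\<psi> z \<le> ln (exp l)" unfolding \<psi>_def
      using Zb[OF m, of "snd z"] p by (subst ln_le_cancel_iff; simp)+
    then show ?thesis by simp
  qed
  have mi: "(\<integral>\<omega>. \<psi> (M \<omega>, ?Y \<omega>) \<partial>P) \<le> prob_space.mutual_information P (exp 1) N arms_space M ?Y
           + ln (\<integral>x. (exp (\<psi> (x, 1)) + exp (\<psi> (x, 2))) / 2 \<partial>distr P N M)"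
    by (rule mi_gibbs[OF assms(1) Mm Ym Y1 Y2 \<psi>m \<psi>b])
  have fx: "exp (- l) \<le> (exp (\<psi> (x, 1)) + exp (\<psi> (x, 2))) / 2 \<and> (exp (\<psi> (x, 1)) + exp (\<psi> (x, 2))) / 2 \<le> exp (l / 2 + l^2 / 8)"
    if x: "x \<in> space N" for x
  proof -
    interpret Tr: prob_space "traj (\<lambda>_. 0) \<pi> x T" by (rule traj_prob(1)[OF pm x])
    have st: "sets (traj (\<lambda>_. 0) \<pi> x T) = sets hist_space" by (rule traj_prob(2)[OF pm x])
    have e: "exp (\<psi> (x, a)) = Z a x" for a unfolding \<psi>_def using Zpos[OF x] by simp
    have ie: "integrable (traj (\<lambda>_. 0) \<pi> x T) (\<lambda>h. exp (phi l T a h))" for a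
      using phi_bounds(1)[OF less_imp_le[OF l0] Tpos] st
      by (intro bounded_integrable[where B="exp l"] prob_fin Tr.prob_space_axioms)
         (auto cong: measurable_cong_sets dest!: abs_le_D1)
    have "(Z 1 x + Z 2 x) / 2 = (\<integral>h. (exp (phi l T 1 h) + exp (phi l T 2 h)) / 2 \<partial>traj (\<lambda>_. 0) \<pi> x T)"
      unfolding Z_def using ie by simp
    also have "\<dots> \<le> (\<integral>h. exp (l / 2 + l^2 / 8) \<partial>traj (\<lambda>_. 0) \<pi> x T)"
    proof (intro integral_mono)
      show "integrable (traj (\<lambda>_. 0) \<pi> x T) (\<lambda>h. (exp (phi l T 1 h) + exp (phi l T 2 h)) / 2)"
        using ie by simp
      fix h
      define q where "q = nA T h / T"
      have q: "0 \<le> q" "q \<le> 1" using nA_bounds[of T h] Tpos by (auto simp: field_simps q_def)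
      have "phi l T 1 h = l * q" "phi l T 2 h = l * (1 - q)" by (simp_all add: phi_def q_def)
      then show "(exp (phi l T 1 h) + exp (phi l T 2 h)) / 2 \<le> exp (l / 2 + l^2 / 8)"
        using two_point[OF less_imp_le[OF l0] q] by simp
    qed simp
    also have "\<dots> = exp (l / 2 + l^2 / 8)" by (simp add: Tr.prob_space)
    finally show ?thesis unfolding e using Zb[OF x, of 1] Zb[OF x, of 2] by simp
  qed
  have Lbound: "ln (\<integral>x. (exp (\<psi> (x, 1)) + exp (\<psi> (x, 2))) / 2 \<partial>distr P N M) \<le> l / 2 + l^2 / 8"
  proof -
    let ?f = "\<lambda>x. (exp (\<psi> (x, 1)) + exp (\<psi> (x, 2))) / 2"
    interpret L: prob_space "distr P N M" by (rule P.prob_space_distr) simp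
    have fm: "?f \<in> borel_measurable (distr P N M)"
    proof -
      have "(\<lambda>x. (x, a)) \<in> N \<rightarrow>\<^sub>M N \<Otimes>\<^sub>M arms_space" if "a \<in> {1, 2}" for a
        using that by (intro measurable_Pair measurable_ident measurable_const) (auto simp: arms_space_def)
      then have "(\<lambda>x. \<psi> (x, a)) \<in> borel_measurable N" if "a \<in> {1, 2}" for a
        using that by (intro measurable_compose[OF _ \<psi>m]) auto
      then show ?thesis by simp
    qed
    have fi: "integrable (distr P N M) ?f"
      using fx fm by (intro bounded_integrable[where B="exp (l / 2 + l^2 / 8)"] prob_fin L.prob_space_axioms) auto
    have "(\<integral>x. ?f x \<partial>distr P N M) \<le> (\<integral>x. exp (l / 2 + l^2 / 8) \<partial>distr P N M)"
      using fx fi by (intro integral_mono) auto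
    moreover have "(\<integral>x. exp (- l) \<partial>distr P N M) \<le> (\<integral>x. ?f x \<partial>distr P N M)"
      using fx fi by (intro integral_mono) auto
    ultimately have a: "(\<integral>x. ?f x \<partial>distr P N M) \<le> exp (l / 2 + l^2 / 8)" and b: "exp (- l) \<le> (\<integral>x. ?f x \<partial>distr P N M)"
      using L.prob_space[simplified] by simp_all
    have "0 < (\<integral>x. ?f x \<partial>distr P N M)" using b by (meson exp_gt_zero less_le_trans)
    then show ?thesis using a by (rule ln_le_exp)
  qed
  define I where "I a v m = (\<integral>h. phi l T a h \<partial>traj v \<pi> m T)" for a v m
  have Im[measurable]: "I a v \<in> borel_measurable N" for a v
    unfolding I_def by (rule measurable_compose[OF trajm integral_measurable_subprob_algebra]) measurable
  define F where "F \<omega> = (if mu \<omega> = ?m1 then I 1 ?m1 (M \<omega>) else I 2 ?m2 (M \<omega>))" for \<omega>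
  have Fm[measurable]: "F \<in> borel_measurable P"
    unfolding F_def by (rule measurable_If[OF _ _ Emu]) measurable
  have Ib: "\<bar>I a v m\<bar> \<le> l" if "m \<in> space N" for a v m
    unfolding I_def using traj_prob[OF pm that] phi_bounds(1)[OF less_imp_le[OF l0] Tpos]
    by (intro abs_integral_le_prob) (auto cong: measurable_cong_sets)
  have gI: "I a v m \<le> T * \<Delta>^2 / 2 + ln (Z a m)" if m: "m \<in> space N" and c: "\<And>b. (v b)^2 \<le> \<Delta>^2" for a v m
  proof -
    have "gibbs (traj v \<pi> m T) (traj (\<lambda>_. 0) \<pi> m T) (real T * \<Delta>^2 / 2)"
      by (rule gibbs_traj[OF pm m c])
    then show ?thesis unfolding gibbs_def I_def Z_def
    proof (elim allE impE)
      show "phi l T a \<in> borel_measurable (traj v \<pi> m T)" using traj_prob(2)[OF pm m] by (simp cong: measurable_cong_sets)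
      show "\<exists>B. \<forall>x\<in>space (traj v \<pi> m T). \<bar>phi l T a x\<bar> \<le> B" using phi_bounds(1)[OF less_imp_le[OF l0] Tpos] by blast
    qed simp
  qed
  have c1: "(?m1 b)^2 \<le> \<Delta>^2" for b by (simp add: mu_one_def)
  have c2: "(?m2 b)^2 \<le> \<Delta>^2" for b by (simp add: mu_two_def)
  have Fle: "F \<omega> \<le> T * \<Delta>^2 / 2 + \<psi> (M \<omega>, ?Y \<omega>)" if w: "\<omega> \<in> space P" for \<omega>
  proof -
    have m: "M \<omega> \<in> space N" using measurable_space[OF Mm w] .
    show ?thesis
    proof (cases "mu \<omega> = ?m1")
      case True
      then show ?thesis using gI[OF m c1, of 1] Yv[OF w] by (simp add: F_def \<psi>_def)
    next
      case False
      then show ?thesis using gI[OF m c2, of 2] Yv[OF w] by (simp add: F_def \<psi>_def)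
    qed
  qed
  have Fb: "\<bar>F \<omega>\<bar> \<le> l" if w: "\<omega> \<in> space P" for \<omega>
    using Ib[OF measurable_space[OF Mm w]] by (simp add: F_def)
  have CRv: "cond_regret \<pi> v m T = \<Delta> * T - (\<Delta> * T / l) * I a v m"
    if m: "m \<in> space N" and r: "\<And>h. (\<Sum>t<T. Max (v ` {1, 2}) - v (fst (h t))) = \<Delta> * T - (\<Delta> * T / l) * phi l T a h" for v m a
  proof -
    interpret Tr: prob_space "traj v \<pi> m T" by (rule traj_prob(1)[OF pm m])
    have st: "sets (traj v \<pi> m T) = sets hist_space" by (rule traj_prob(2)[OF pm m])
    have ip: "integrable (traj v \<pi> m T) (phi l T a)"
      using phi_bounds(1)[OF less_imp_le[OF l0] Tpos] st
      by (intro bounded_integrable[where B=l] prob_fin Tr.prob_space_axioms) (auto cong: measurable_cong_sets)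
    have "cond_regret \<pi> v m T = (\<integral>h. \<Delta> * T - (\<Delta> * T / l) * phi l T a h \<partial>traj v \<pi> m T)"
      unfolding cond_regret_def r ..
    also have "\<dots> = \<Delta> * T - (\<Delta> * T / l) * I a v m"
      unfolding I_def using ip by (simp add: Tr.prob_space)
    finally show ?thesis .
  qed
  have CR: "cond_regret \<pi> (mu \<omega>) (M \<omega>) T = \<Delta> * T - (\<Delta> * T / l) * F \<omega>" if w: "\<omega> \<in> space P" for \<omega>
  proof -
    have m: "M \<omega> \<in> space N" using measurable_space[OF Mm w] .
    show ?thesis
    proof (cases "mu \<omega> = ?m1")
      case True
      then show ?thesis using CRv[OF m regret_one[OF D l0 Tpos]] by (simp add: F_def)
    next
      case False
      then have "mu \<omega> = ?m2" using mu_vals[OF w] by simp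
      then show ?thesis using CRv[OF m regret_two[OF D l0 Tpos]] False by (simp add: F_def)
    qed
  qed
  have \<psi>MY[measurable]: "(\<lambda>\<omega>. \<psi> (M \<omega>, ?Y \<omega>)) \<in> borel_measurable P"
    by (rule measurable_compose[OF measurable_Pair[OF Mm Ym] \<psi>m])
  have \<psi>MYb: "\<bar>\<psi> (M \<omega>, ?Y \<omega>)\<bar> \<le> l" if w: "\<omega> \<in> space P" for \<omega>
    using \<psi>b measurable_space[OF measurable_Pair[OF Mm Ym] w] by blast
  have iF: "integrable P F" using Fb by (intro bounded_integrable[where B=l] prob_fin assms(1)) auto
  have i\<psi>: "integrable P (\<lambda>\<omega>. \<psi> (M \<omega>, ?Y \<omega>))" using \<psi>MYb by (intro bounded_integrable[where B=l] prob_fin assms(1)) auto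
  have "(\<integral>\<omega>. F \<omega> \<partial>P) \<le> (\<integral>\<omega>. T * \<Delta>^2 / 2 + \<psi> (M \<omega>, ?Y \<omega>) \<partial>P)"
    using Fle iF i\<psi> by (intro integral_mono) auto
  also have "\<dots> = T * \<Delta>^2 / 2 + (\<integral>\<omega>. \<psi> (M \<omega>, ?Y \<omega>) \<partial>P)"
    using i\<psi> by (simp add: P.prob_space)
  also have "\<dots> \<le> T * \<Delta>^2 / 2 + 1/16 + (l / 2 + l^2 / 8)"
    using mi Lbound assms(8) by linarith
  finally have Fint: "(\<integral>\<omega>. F \<omega> \<partial>P) \<le> K + l / 2 + l^2 / 8" unfolding K_def by simp
  have "(\<integral>\<omega>. cond_regret \<pi> (mu \<omega>) (M \<omega>) T \<partial>P) = (\<integral>\<omega>. \<Delta> * T - (\<Delta> * T / l) * F \<omega> \<partial>P)"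
    using CR by (intro Bochner_Integration.integral_cong) auto
  also have "\<dots> = \<Delta> * T - (\<Delta> * T / l) * (\<integral>\<omega>. F \<omega> \<partial>P)"
    using iF by (simp add: P.prob_space)
  finally have BR: "(\<integral>\<omega>. cond_regret \<pi> (mu \<omega>) (M \<omega>) T \<partial>P) = \<Delta> * T - (\<Delta> * T / l) * (\<integral>\<omega>. F \<omega> \<partial>P)" .
  have DT: "0 \<le> \<Delta> * T / l" using D l0 by simp
  have "(\<Delta> * T / l) * (\<integral>\<omega>. F \<omega> \<partial>P) \<le> (\<Delta> * T / l) * (K + l / 2 + l^2 / 8)"
    using Fint DT by (rule mult_left_mono)
  also have "(\<Delta> * T / l) * (K + l / 2 + l^2 / 8) = \<Delta> * T * (1/2 + l / 4)"
    using l0 l2 by (simp add: field_simps power2_eq_square)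
  finally have BR2: "(\<integral>\<omega>. cond_regret \<pi> (mu \<omega>) (M \<omega>) T \<partial>P) \<ge> \<Delta> * T * (1/2 - l / 4)"
    unfolding BR by (simp add: algebra_simps)
  have s16: "sqrt 16 = (4::real)"
  proof -
    have "(16::real) = 4^2" by simp
    then show ?thesis by (simp only: real_sqrt_abs)
  qed
  have "l / 4 = sqrt (K / 2)"
  proof -
    have "sqrt (8 * K) = sqrt (16 * (K / 2))" by simp
    also have "\<dots> = 4 * sqrt (K / 2)" by (simp only: real_sqrt_mult s16)
    finally show ?thesis unfolding l_def by simp
  qed
  also have "\<dots> \<le> sqrt (1/2 * (1/16 + 4 * T * \<Delta>^2))"
    unfolding K_def by (simp add: field_simps)
  finally have "l / 4 \<le> sqrt (1/2 * (1/16 + 4 * T * \<Delta>^2))" .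
  then have "\<Delta> * T * (1/2 - sqrt (1/2 * (1/16 + 4 * T * \<Delta>^2))) \<le> \<Delta> * T * (1/2 - l / 4)"
    using D by (intro mult_left_mono) auto
  then show ?thesis using BR2 by linarith
qed

end
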